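(* Let $\hat G$ be a $C_2$-graded finite group acting on $\mathbb C[[u,v]]$ by degree-preserving generalized algebra automorphisms preserving $uv$. The matrix factorization $\{u,v\}\in\mathrm{MF}(\mathbb C[[u,v]],uv)$ admits a Real $G$-equivariant structure (i.e. can be lifted to an object of $\mathrm{MF}_{\hat G}(\mathbb C[[u,v]],uv)$) if and only if there exists $\chi\in Z^1(\hat G;\mathbb C^\times_\pi)$ with $\sigma(u)=\chi(\sigma)u$ and $\sigma(v)=\chi(\sigma)^{-1}v$ for all $\sigma\in\hat G$. In that case the set of dg isomorphism classes of Real $G$-equivariant structures on $\{u,v\}$ is in bijection with $H^1(\hat G;\mathbb C[[u,v]]^\times_\pi)$.
   Context: $C_2=\{\pm1\}$; $\pi:\hat G\to C_2$, $G=\ker\pi$. $\mathbb C^\times_\pi$ is $\mathbb C^\times$ with $\hat G$ acting through $\pi$ by complex conjugation; $\mathbb C[[u,v]]^\times_\pi$ is the group of units with $\hat G$ acting through its given action on $\mathbb C[[u,v]]$; $Z^1$, $H^1$ are (normalized) group cocycles and cohomology. A generalized algebra automorphism is a ring automorphism which is $\mathbb C$-linear or $\mathbb C$-antilinear; $\sigma\in\hat G$ is linear iff $\pi(\sigma)=1$. $\mathrm{MF}(S,w)$: objects $(M,d_M)$, $M$ finite rank free $\mathbb Z/2$-graded $S$-module, $d_M$ odd with $d_M^2=w\,\mathrm{id}$; Hom complexes $\mathrm{Hom}_S(M,N)$ with $D(f)=d_Nf-(-1)^{|f|}fd_M$. $\{u,v\}$ is $S\oplus S$ with $d^0=u:M_0\to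 M_1$, $d^1=v:M_1\to M_0$. $M^\sigma$ is $M$ with $r\cdot m=\sigma^{-1}(r)m$. The functors $\rho(\sigma)(M,d_M)=(M^\sigma,d_M^\sigma)$ with identity coherence maps give a Real 2-representation of $G$; a Real $G$-equivariant structure on $M$ is a family of closed degree-0 isomorphisms $u_\sigma:M\to M^\sigma$ with $u_{\sigma_2\sigma_1}=(u_{\sigma_1})^{\sigma_2}\circ u_{\sigma_2}$; $\mathrm{MF}_{\hat G}$ is the category of such pairs with morphisms $f$ satisfying $u'_\sigma f=f^\sigma u_\sigma$. *)

theory Defs
  imports "HOL-Algebra.Group" "HOL-Computational_Algebra.Formal_Power_Series"
begin

text \<open>We model C[[u,v]] as (C[[u]])[[v]]: the outer power-series variable is v,
  the inner one is u.  This is canonically isomorphic to C[[u,v]] as a C-algebra.\<close>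

type_synonym S = "complex fps fps"

definition U :: S where "U = fps_const fps_X"
definition V :: S where "V = fps_X"

definition sc :: "complex \<Rightarrow> S" where "sc c = fps_const (fps_const c)"

definition coeff2 :: "S \<Rightarrow> nat \<Rightarrow> nat \<Rightarrow> complex" where
  "coeff2 f i j = fps_nth (fps_nth f j) i"

definition hom_deg :: "nat \<Rightarrow> S \<Rightarrow> bool" where
  "hom_deg d f \<longleftrightarrow> (\<forall>i j. coeff2 f i j \<noteq> 0 \<longrightarrow> i + j = d)"

definition degree_preserving :: "(S \<Rightarrow> S) \<Rightarrow> bool" where
  "degree_preserving \<phi> \<longleftrightarrow> (\<forall>d f. hom_deg d f \<longrightarrow> hom_deg d (\<phi> f))"

definition C2_graded_group :: "('g, 'm) monoid_scheme \<Rightarrow> ('g \<Rightarrow> int) \<Rightarrow> bool" where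
  "C2_graded_group G \<pi> \<longleftrightarrow> group G \<and>
     (\<forall>\<sigma>\<in>carrier G. \<pi> \<sigma> = 1 \<or> \<pi> \<sigma> = -1) \<and>
     (\<forall>\<sigma>\<in>carrier G. \<forall>\<tau>\<in>carrier G. \<pi> (\<sigma> \<otimes>\<^bsub>G\<^esub> \<tau>) = \<pi> \<sigma> * \<pi> \<tau>)"

definition gen_alg_aut :: "int \<Rightarrow> (S \<Rightarrow> S) \<Rightarrow> bool" where
  "gen_alg_aut p \<phi> \<longleftrightarrow> bij \<phi> \<and>
     (\<forall>f g. \<phi> (f + g) = \<phi> f + \<phi> g) \<and>
     (\<forall>f g. \<phi> (f * g) = \<phi> f * \<phi> g) \<and> \<phi> 1 = 1 \<and>
     (p = 1 \<longrightarrow> (\<forall>c f. \<phi> (sc c * f) = sc c * \<phi> f)) \<and>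
     (p = -1 \<longrightarrow> (\<forall>c f. \<phi> (sc c * f) = sc (cnj c) * \<phi> f))"

definition valid_action ::
  "('g, 'm) monoid_scheme \<Rightarrow> ('g \<Rightarrow> int) \<Rightarrow> ('g \<Rightarrow> S \<Rightarrow> S) \<Rightarrow> bool" where
  "valid_action G \<pi> act \<longleftrightarrow>
     act \<one>\<^bsub>G\<^esub> = id \<and>
     (\<forall>\<sigma>\<in>carrier G. \<forall>\<tau>\<in>carrier G. act (\<sigma> \<otimes>\<^bsub>G\<^esub> \<tau>) = act \<sigma> \<circ> act \<tau>) \<and>
     (\<forall>\<sigma>\<in>carrier G. gen_alg_aut (\<pi> \<sigma>) (act \<sigma>) \<and> degree_preserving (act \<sigma>)
                      \<and> act \<sigma> (U * V) = U * V)"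

definition conj_pi :: "int \<Rightarrow> complex \<Rightarrow> complex" where
  "conj_pi p z = (if p = 1 then z else cnj z)"

definition Z1_C :: "('g, 'm) monoid_scheme \<Rightarrow> ('g \<Rightarrow> int) \<Rightarrow> ('g \<Rightarrow> complex) set" where
  "Z1_C G \<pi> = {\<chi>. (\<forall>\<sigma>\<in>carrier G. \<chi> \<sigma> \<noteq> 0) \<and> \<chi> \<one>\<^bsub>G\<^esub> = 1 \<and>
     (\<forall>\<sigma>\<in>carrier G. \<forall>\<tau>\<in>carrier G.
        \<chi> (\<sigma> \<otimes>\<^bsub>G\<^esub> \<tau>) = \<chi> \<sigma> * conj_pi (\<pi> \<sigma>) (\<chi> \<tau>))}"

definition Z1_S :: "('g, 'm) monoid_scheme \<Rightarrow> ('g \<Rightarrow> S \<Rightarrow> S) \<Rightarrow> ('g \<Rightarrow> S) set" where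
  "Z1_S G act = {c. (\<forall>\<sigma>\<in>carrier G. c \<sigma> dvd 1) \<and> c \<one>\<^bsub>G\<^esub> = 1 \<and>
     (\<forall>\<sigma>\<in>carrier G. \<forall>\<tau>\<in>carrier G.
        c (\<sigma> \<otimes>\<^bsub>G\<^esub> \<tau>) = c \<sigma> * act \<sigma> (c \<tau>))}"

definition cohom_S :: "('g, 'm) monoid_scheme \<Rightarrow> ('g \<Rightarrow> S \<Rightarrow> S) \<Rightarrow> (('g \<Rightarrow> S) \<times> ('g \<Rightarrow> S)) set" where
  "cohom_S G act = {(c, c'). c \<in> Z1_S G act \<and> c' \<in> Z1_S G act \<and>
     (\<exists>b. b dvd 1 \<and> (\<forall>\<sigma>\<in>carrier G. b * c' \<sigma> = c \<sigma> * act \<sigma> b))}"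

definition H1_S :: "('g, 'm) monoid_scheme \<Rightarrow> ('g \<Rightarrow> S \<Rightarrow> S) \<Rightarrow> ('g \<Rightarrow> S) set set" where
  "H1_S G act = Z1_S G act // cohom_S G act"

text \<open>{u,v} = S (+) S with d^0 = u : M_0 -> M_1 and d^1 = v : M_1 -> M_0.
  A degree-0 map M -> N of Z/2-graded modules is a pair (f0, f1) of component maps.
  The twisted module M^sigma has the same underlying group with r.m = sigma^{-1}(r) m,
  and d^sigma is the same underlying map as d.  A degree-0 map M -> M^sigma is thus a
  pair of additive maps semilinear w.r.t. sigma^{-1}; closedness means commuting with d.\<close>

definition semilin :: "(S \<Rightarrow> S) \<Rightarrow> (S \<Rightarrow> S) \<Rightarrow> bool" where
  "semilin \<theta> f \<longleftrightarrow> (\<forall>m n. f (m + n) = f m + f n) \<and> (\<forall>r m. f (r * m) = \<theta> r * f m)"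

definition closed_uv :: "(S \<Rightarrow> S) \<times> (S \<Rightarrow> S) \<Rightarrow> bool" where
  "closed_uv f \<longleftrightarrow> (\<forall>m. snd f (U * m) = U * fst f m) \<and> (\<forall>m. fst f (V * m) = V * snd f m)"

definition comp2 :: "(S \<Rightarrow> S) \<times> (S \<Rightarrow> S) \<Rightarrow> (S \<Rightarrow> S) \<times> (S \<Rightarrow> S) \<Rightarrow> (S \<Rightarrow> S) \<times> (S \<Rightarrow> S)" where
  "comp2 f g = (fst f \<circ> fst g, snd f \<circ> snd g)"

text \<open>Real G-equivariant structures on {u,v}: closed degree-0 isomorphisms
  u_sigma : M -> M^sigma with u_{sigma2 sigma1} = (u_{sigma1})^{sigma2} o u_{sigma2}.\<close>
definition real_eq_structs ::
  "('g, 'm) monoid_scheme \<Rightarrow> ('g \<Rightarrow> S \<Rightarrow> S) \<Rightarrow> ('g \<Rightarrow> (S \<Rightarrow> S) \<times> (S \<Rightarrow> S)) set" where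
  "real_eq_structs G act = {us.
     (\<forall>\<sigma>\<in>carrier G.
        semilin (act (inv\<^bsub>G\<^esub> \<sigma>)) (fst (us \<sigma>)) \<and> semilin (act (inv\<^bsub>G\<^esub> \<sigma>)) (snd (us \<sigma>)) \<and>
        bij (fst (us \<sigma>)) \<and> bij (snd (us \<sigma>)) \<and> closed_uv (us \<sigma>)) \<and>
     (\<forall>\<sigma>1\<in>carrier G. \<forall>\<sigma>2\<in>carrier G. us (\<sigma>2 \<otimes>\<^bsub>G\<^esub> \<sigma>1) = comp2 (us \<sigma>1) (us \<sigma>2))}"

text \<open>Isomorphism in MF_G-hat: a closed degree-0 S-linear isomorphism f : {u,v} -> {u,v}
  with u'_sigma f = f^sigma u_sigma (f^sigma has the same underlying map as f).\<close>
definition struct_iso ::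
  "('g, 'm) monoid_scheme \<Rightarrow> ('g \<Rightarrow> S \<Rightarrow> S) \<Rightarrow>
   (('g \<Rightarrow> (S \<Rightarrow> S) \<times> (S \<Rightarrow> S)) \<times> ('g \<Rightarrow> (S \<Rightarrow> S) \<times> (S \<Rightarrow> S))) set" where
  "struct_iso G act = {(us, us'). us \<in> real_eq_structs G act \<and> us' \<in> real_eq_structs G act \<and>
     (\<exists>f. semilin id (fst f) \<and> semilin id (snd f) \<and> bij (fst f) \<and> bij (snd f) \<and>
          closed_uv f \<and> (\<forall>\<sigma>\<in>carrier G. comp2 (us' \<sigma>) f = comp2 f (us \<sigma>)))}"

end

theory Submission
  imports Defs
begin

lemma U_nz: "U \<noteq> 0"
proof
  assume "U = 0"
  hence "fps_nth (fps_nth U 0) 1 = fps_nth (fps_nth (0::S) 0) 1" by simp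
  thus False by (simp add: U_def)
qed

lemma U_cancel: "U * x = U * y \<Longrightarrow> x = y"
  using U_nz by simp

lemma sc_mult: "sc a * sc b = sc (a * b)"
  by (simp add: sc_def)
lemma sc_one[simp]: "sc 1 = 1" by (simp add: sc_def)
lemma sc_zero[simp]: "sc 0 = 0" by (simp add: sc_def)
lemma sc_inj: "sc a = sc b \<Longrightarrow> a = b"
proof -
  assume "sc a = sc b"
  hence "fps_nth (fps_nth (sc a) 0) 0 = fps_nth (fps_nth (sc b) 0) 0" by simp
  thus ?thesis by (simp add: sc_def)
qed

lemma hom1_U: "hom_deg 1 U"
  by (auto simp: hom_deg_def coeff2_def U_def fps_X_def split: if_splits)

lemma hom1_form:
  assumes "hom_deg 1 (U * w)"
  shows "U * w = sc (coeff2 w 0 0) * U"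
proof (rule fps_ext, rule fps_ext)
  fix j i
  have L: "fps_nth (fps_nth (U * w) j) i = (if i = 0 then 0 else coeff2 w (i - 1) j)"
    by (simp add: U_def coeff2_def)
  have R: "fps_nth (fps_nth (sc (coeff2 w 0 0) * U) j) i = (if i = 1 \<and> j = 0 then coeff2 w 0 0 else 0)"
    by (simp add: U_def sc_def fps_X_def)
  have H: "coeff2 (U * w) i j \<noteq> 0 \<Longrightarrow> i + j = 1"
    using assms by (simp add: hom_deg_def)
  show "fps_nth (fps_nth (U * w) j) i = fps_nth (fps_nth (sc (coeff2 w 0 0) * U) j) i"
  proof (cases "i = 1 \<and> j = 0")
    case True thus ?thesis using L R by simp
  next
    case False
    have "coeff2 (U * w) i j = 0"
    proof (rule ccontr)
      assume nz: "coeff2 (U * w) i j \<noteq> 0"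
      with H have "i + j = 1" by blast
      with False have "i = 0" by auto
      with L nz show False by (simp add: coeff2_def)
    qed
    hence "fps_nth (fps_nth (U * w) j) i = 0" by (simp add: coeff2_def)
    thus ?thesis using R False by auto
  qed
qed

lemma conj_pi_mult: "conj_pi p (a * b) = conj_pi p a * conj_pi p b"
  by (simp add: conj_pi_def)
lemma conj_pi_inverse: "conj_pi p (inverse a) = inverse (conj_pi p a)"
  by (simp add: conj_pi_def complex_cnj_inverse)
lemma conj_pi_nz: "conj_pi p a = 0 \<longleftrightarrow> a = 0"
  by (simp add: conj_pi_def)
lemma conj_pi_one[simp]: "conj_pi p 1 = 1"
  by (simp add: conj_pi_def)

lemma quot_bij:
  assumes eqB: "equiv B RB" and RA: "RA \<subseteq> A \<times> A" and Phi: "\<forall>x\<in>A. \<Phi> x \<in> B"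
    and sur: "\<forall>y\<in>B. \<exists>x\<in>A. (\<Phi> x, y) \<in> RB"
    and iff: "\<forall>x\<in>A. \<forall>y\<in>A. (x, y) \<in> RA \<longleftrightarrow> (\<Phi> x, \<Phi> y) \<in> RB"
  shows "\<exists>F. bij_betw F (A // RA) (B // RB)"
proof -
  have eqA: "equiv A RA"
  proof (rule equivI)
    show "refl_on A RA" using eqB Phi iff by (auto simp: refl_on_def equiv_def)
    show "sym RA" using eqB RA iff by (auto simp: sym_def equiv_def)
    show "trans RA" using eqB RA iff unfolding equiv_def trans_def by blast
    show "RA \<subseteq> A \<times> A" by (rule RA)
  qed
  define F where "F X = RB `` (\<Phi> ` X)" for X
  have Fc: "F (RA `` {x}) = RB `` {\<Phi> x}" if x: "x \<in> A" for x
  proof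
    show "F (RA `` {x}) \<subseteq> RB `` {\<Phi> x}"
    proof
      fix z assume "z \<in> F (RA `` {x})"
      then obtain x' where "(x, x') \<in> RA" "(\<Phi> x', z) \<in> RB" by (auto simp: F_def)
      moreover have "x' \<in> A" using RA \<open>(x, x') \<in> RA\<close> by auto
      ultimately have "(\<Phi> x, \<Phi> x') \<in> RB" "(\<Phi> x', z) \<in> RB" using iff x by auto
      hence "(\<Phi> x, z) \<in> RB" using eqB unfolding equiv_def trans_def by blast
      thus "z \<in> RB `` {\<Phi> x}" by simp
    qed
    have "(x, x) \<in> RA" using eqA x by (meson equiv_def refl_onD)
    thus "RB `` {\<Phi> x} \<subseteq> F (RA `` {x})" by (auto simp: F_def)
  qed
  have "bij_betw F (A // RA) (B // RB)"
  proof (rule bij_betw_imageI)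
    show "inj_on F (A // RA)"
    proof (rule inj_onI)
      fix X Y assume "X \<in> A // RA" "Y \<in> A // RA" and e: "F X = F Y"
      then obtain x y where x: "x \<in> A" "X = RA `` {x}" and y: "y \<in> A" "Y = RA `` {y}"
        by (auto elim!: quotientE)
      have "RB `` {\<Phi> x} = RB `` {\<Phi> y}" using e Fc x y by simp
      hence "(\<Phi> x, \<Phi> y) \<in> RB" using eqB Phi x y by (simp add: eq_equiv_class_iff)
      hence "(x, y) \<in> RA" using iff x y by simp
      thus "X = Y" using x y eqA by (simp add: equiv_class_eq)
    qed
    show "F ` (A // RA) = B // RB"
    proof
      show "F ` (A // RA) \<subseteq> B // RB"
        using Fc Phi by (auto simp: quotient_def)
      show "B // RB \<subseteq> F ` (A // RA)"
      proof
        fix Z assume "Z \<in> B // RB"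
        then obtain y where y: "y \<in> B" "Z = RB `` {y}" by (auto elim!: quotientE)
        obtain x where x: "x \<in> A" "(\<Phi> x, y) \<in> RB" using sur y by blast
        have "RB `` {\<Phi> x} = RB `` {y}" using eqB x by (simp add: equiv_class_eq)
        hence "Z = F (RA `` {x})" using Fc x y by simp
        thus "Z \<in> F ` (A // RA)" using x by (auto simp: quotient_def)
      qed
    qed
  qed
  thus ?thesis by blast
qed

locale setting =
  fixes G :: "('g, 'm) monoid_scheme" and \<pi> :: "'g \<Rightarrow> int" and act :: "'g \<Rightarrow> S \<Rightarrow> S"
  assumes C2: "C2_graded_group G \<pi>" and VA: "valid_action G \<pi> act"
begin

lemma grp: "group G" using C2 by (simp add: C2_graded_group_def)

lemma act_one: "act \<one>\<^bsub>G\<^esub> = id" using VA by (simp add: valid_action_def)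

lemma act_mult: "\<sigma> \<in> carrier G \<Longrightarrow> \<tau> \<in> carrier G \<Longrightarrow> act (\<sigma> \<otimes>\<^bsub>G\<^esub> \<tau>) x = act \<sigma> (act \<tau> x)"
  using VA by (simp add: valid_action_def)

lemma gaa: "\<sigma> \<in> carrier G \<Longrightarrow> gen_alg_aut (\<pi> \<sigma>) (act \<sigma>)"
  using VA by (simp add: valid_action_def)

lemma pi_val: "\<sigma> \<in> carrier G \<Longrightarrow> \<pi> \<sigma> = 1 \<or> \<pi> \<sigma> = -1"
  using C2 by (simp add: C2_graded_group_def)

lemma act_add: "\<sigma> \<in> carrier G \<Longrightarrow> act \<sigma> (f + g) = act \<sigma> f + act \<sigma> g"
  using gaa by (simp add: gen_alg_aut_def)
lemma act_mul: "\<sigma> \<in> carrier G \<Longrightarrow> act \<sigma> (f * g) = act \<sigma> f * act \<sigma> g"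
  using gaa by (simp add: gen_alg_aut_def)
lemma act_1: "\<sigma> \<in> carrier G \<Longrightarrow> act \<sigma> 1 = 1"
  using gaa by (simp add: gen_alg_aut_def)
lemma act_bij: "\<sigma> \<in> carrier G \<Longrightarrow> bij (act \<sigma>)"
  using gaa by (simp add: gen_alg_aut_def)
lemma act_0: "\<sigma> \<in> carrier G \<Longrightarrow> act \<sigma> 0 = 0"
  using act_add[of \<sigma> 0 0] by simp
lemma act_sc: "\<sigma> \<in> carrier G \<Longrightarrow> act \<sigma> (sc c * f) = sc (conj_pi (\<pi> \<sigma>) c) * act \<sigma> f"
  using gaa[of \<sigma>] pi_val[of \<sigma>] by (auto simp: gen_alg_aut_def conj_pi_def)
lemma act_sc1: "\<sigma> \<in> carrier G \<Longrightarrow> act \<sigma> (sc c) = sc (conj_pi (\<pi> \<sigma>) c)"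
  using act_sc[of \<sigma> c 1] act_1[of \<sigma>] by simp
lemma act_unit: "\<sigma> \<in> carrier G \<Longrightarrow> b * p = 1 \<Longrightarrow> act \<sigma> b * act \<sigma> p = 1"
  by (metis act_mul act_1)
lemma act_hom: "\<sigma> \<in> carrier G \<Longrightarrow> hom_deg 1 (act \<sigma> U)"
  using VA hom1_U by (simp add: valid_action_def degree_preserving_def)
lemma act_UV: "\<sigma> \<in> carrier G \<Longrightarrow> act \<sigma> (U * V) = U * V"
  using VA by (simp add: valid_action_def)

lemma inv_c[simp]: "\<sigma> \<in> carrier G \<Longrightarrow> inv\<^bsub>G\<^esub> \<sigma> \<in> carrier G"
  using grp by simp
lemma inv_inv'[simp]: "\<sigma> \<in> carrier G \<Longrightarrow> inv\<^bsub>G\<^esub> (inv\<^bsub>G\<^esub> \<sigma>) = \<sigma>"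
  using grp by simp
lemma inv_mult': "\<sigma> \<in> carrier G \<Longrightarrow> \<tau> \<in> carrier G \<Longrightarrow>
   inv\<^bsub>G\<^esub> (\<sigma> \<otimes>\<^bsub>G\<^esub> \<tau>) = inv\<^bsub>G\<^esub> \<tau> \<otimes>\<^bsub>G\<^esub> inv\<^bsub>G\<^esub> \<sigma>"
  using grp by (simp add: group.inv_mult_group)
lemma inv_one'[simp]: "inv\<^bsub>G\<^esub> \<one>\<^bsub>G\<^esub> = \<one>\<^bsub>G\<^esub>"
  using grp by (simp add: group.is_monoid monoid.inv_one)
lemma one_c[simp]: "\<one>\<^bsub>G\<^esub> \<in> carrier G"
  using grp by (simp add: group.is_monoid monoid.one_closed)
lemma mult_c[simp]: "\<sigma> \<in> carrier G \<Longrightarrow> \<tau> \<in> carrier G \<Longrightarrow> \<sigma> \<otimes>\<^bsub>G\<^esub> \<tau> \<in> carrier G"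
  using grp by (simp add: group.is_monoid monoid.m_closed)


lemma res_at:
  assumes "us \<in> real_eq_structs G act" "\<sigma> \<in> carrier G"
  shows "semilin (act (inv\<^bsub>G\<^esub> \<sigma>)) (fst (us \<sigma>)) \<and> semilin (act (inv\<^bsub>G\<^esub> \<sigma>)) (snd (us \<sigma>)) \<and>
        bij (fst (us \<sigma>)) \<and> bij (snd (us \<sigma>)) \<and> closed_uv (us \<sigma>)"
  using assms by (simp add: real_eq_structs_def)

lemma res_comp:
  assumes "us \<in> real_eq_structs G act" "\<sigma>1 \<in> carrier G" "\<sigma>2 \<in> carrier G"
  shows "us (\<sigma>2 \<otimes>\<^bsub>G\<^esub> \<sigma>1) = comp2 (us \<sigma>1) (us \<sigma>2)"
  using assms by (simp add: real_eq_structs_def)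

lemma struct_U:
  assumes us: "us \<in> real_eq_structs G act" and s: "\<sigma> \<in> carrier G"
  shows "\<exists>c. act \<sigma> U = sc c * U"
proof -
  let ?t = "inv\<^bsub>G\<^esub> \<sigma>"
  have t: "?t \<in> carrier G" using s by simp
  define A where "A = fst (us ?t)"
  define B where "B = snd (us ?t)"
  have semA: "semilin (act \<sigma>) A" and semB: "semilin (act \<sigma>) B" and bB: "bij B"
    and cl: "closed_uv (us ?t)"
    using res_at[OF us t] s by (auto simp: A_def B_def)
  have B_form: "B m = act \<sigma> m * B 1" for m
    using semB unfolding semilin_def by (metis mult.right_neutral)
  obtain m where "B m = 1" using bB by (metis bij_pointE)
  hence inv: "B 1 * act \<sigma> m = 1" using B_form[of m] by (simp add: mult.commute)
  have "B (U * 1) = U * A 1" using cl unfolding closed_uv_def A_def B_def by blast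
  hence e: "act \<sigma> U * B 1 = U * A 1" using B_form[of "U * 1"] by simp
  have "act \<sigma> U = act \<sigma> U * (B 1 * act \<sigma> m)" using inv by simp
  also have "\<dots> = U * (A 1 * act \<sigma> m)" using e by (simp add: mult.assoc[symmetric])
  finally have eq: "act \<sigma> U = U * (A 1 * act \<sigma> m)" .
  have "hom_deg 1 (U * (A 1 * act \<sigma> m))" using act_hom[OF s] eq by simp
  from hom1_form[OF this] eq show ?thesis by auto
qed

lemma chi_exists:
  assumes h: "\<forall>\<sigma>\<in>carrier G. \<exists>c. act \<sigma> U = sc c * U"
  shows "\<exists>\<chi>\<in>Z1_C G \<pi>. \<forall>\<sigma>\<in>carrier G.
               act \<sigma> U = sc (\<chi> \<sigma>) * U \<and> act \<sigma> V = sc (inverse (\<chi> \<sigma>)) * V"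
proof -
  define \<chi> where "\<chi> \<sigma> = (SOME c. act \<sigma> U = sc c * U)" for \<sigma>
  have hc: "act \<sigma> U = sc (\<chi> \<sigma>) * U" if "\<sigma> \<in> carrier G" for \<sigma>
    unfolding \<chi>_def using h that by (metis (mono_tags) someI_ex)
  have nz: "\<chi> \<sigma> \<noteq> 0" if s: "\<sigma> \<in> carrier G" for \<sigma>
  proof
    assume "\<chi> \<sigma> = 0"
    hence "act \<sigma> U = act \<sigma> 0" using hc[OF s] act_0[OF s] by simp
    hence "U = 0" using act_bij[OF s] by (meson bij_def injD)
    thus False using U_nz by simp
  qed
  have one: "\<chi> \<one>\<^bsub>G\<^esub> = 1"
  proof -
    have "U * sc (\<chi> \<one>\<^bsub>G\<^esub>) = U * sc 1" using hc[OF one_c] act_one by (simp add: mult.commute)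
    hence "sc (\<chi> \<one>\<^bsub>G\<^esub>) = sc 1" by (rule U_cancel)
    thus ?thesis by (rule sc_inj)
  qed
  have coc: "\<chi> (\<sigma> \<otimes>\<^bsub>G\<^esub> \<tau>) = \<chi> \<sigma> * conj_pi (\<pi> \<sigma>) (\<chi> \<tau>)"
    if s: "\<sigma> \<in> carrier G" and t: "\<tau> \<in> carrier G" for \<sigma> \<tau>
  proof -
    have "sc (\<chi> (\<sigma> \<otimes>\<^bsub>G\<^esub> \<tau>)) * U = act \<sigma> (act \<tau> U)"
      using hc[of "\<sigma> \<otimes>\<^bsub>G\<^esub> \<tau>"] act_mult[OF s t] s t by simp
    also have "\<dots> = sc (conj_pi (\<pi> \<sigma>) (\<chi> \<tau>)) * (sc (\<chi> \<sigma>) * U)"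
      using hc[OF t] hc[OF s] act_sc[OF s] by simp
    also have "\<dots> = sc (\<chi> \<sigma> * conj_pi (\<pi> \<sigma>) (\<chi> \<tau>)) * U"
      by (simp add: mult.assoc[symmetric] sc_mult mult.commute)
    finally have "U * sc (\<chi> (\<sigma> \<otimes>\<^bsub>G\<^esub> \<tau>)) = U * sc (\<chi> \<sigma> * conj_pi (\<pi> \<sigma>) (\<chi> \<tau>))"
      by (simp add: mult.commute)
    thus ?thesis by (metis U_cancel sc_inj)
  qed
  have hv: "act \<sigma> V = sc (inverse (\<chi> \<sigma>)) * V" if s: "\<sigma> \<in> carrier G" for \<sigma>
  proof -
    have "U * (sc (\<chi> \<sigma>) * act \<sigma> V) = U * V"
      using act_UV[OF s] act_mul[OF s, of U V] hc[OF s] by (simp add: mult_ac)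
    hence e: "sc (\<chi> \<sigma>) * act \<sigma> V = V" by (rule U_cancel)
    have "act \<sigma> V = sc (inverse (\<chi> \<sigma>)) * (sc (\<chi> \<sigma>) * act \<sigma> V)"
      using nz[OF s] by (simp add: mult.assoc[symmetric] sc_mult)
    thus ?thesis using e by simp
  qed
  have "\<chi> \<in> Z1_C G \<pi>" using nz one coc by (simp add: Z1_C_def)
  thus ?thesis using hc hv by blast
qed

end

lemma bij_mult_unit:
  fixes \<theta> :: "S \<Rightarrow> S"
  assumes "bij \<theta>" "x * x' = 1"
  shows "bij (\<lambda>m. \<theta> m * x)"
proof (rule bijI)
  show "inj (\<lambda>m. \<theta> m * x)"
  proof (rule injI)
    fix m n assume "\<theta> m * x = \<theta> n * x"
    hence "\<theta> m * x * x' = \<theta> n * x * x'" by simp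
    hence "\<theta> m = \<theta> n" using assms(2) by (simp add: mult.assoc)
    thus "m = n" using assms(1) by (meson bij_def injD)
  qed
  show "surj (\<lambda>m. \<theta> m * x)"
    unfolding surj_def
  proof
    fix y
    obtain m where "\<theta> m = y * x'" using assms(1) by (metis bij_pointE)
    hence "\<theta> m * x = y" using assms(2) by (simp add: mult_ac)
    thus "\<exists>m. y = \<theta> m * x" by metis
  qed
qed

locale chiset = setting +
  fixes \<chi> :: "'g \<Rightarrow> complex"
  assumes chiZ: "\<chi> \<in> Z1_C G \<pi>"
    and chiUV: "\<forall>\<sigma>\<in>carrier G. act \<sigma> U = sc (\<chi> \<sigma>) * U \<and> act \<sigma> V = sc (inverse (\<chi> \<sigma>)) * V"
begin

lemma chiU: "\<sigma> \<in> carrier G \<Longrightarrow> act \<sigma> U = sc (\<chi> \<sigma>) * U" using chiUV by blast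
lemma chiV: "\<sigma> \<in> carrier G \<Longrightarrow> act \<sigma> V = sc (inverse (\<chi> \<sigma>)) * V" using chiUV by blast
lemma chi_nz: "\<sigma> \<in> carrier G \<Longrightarrow> \<chi> \<sigma> \<noteq> 0" using chiZ by (simp add: Z1_C_def)
lemma chi_coc: "\<sigma> \<in> carrier G \<Longrightarrow> \<tau> \<in> carrier G \<Longrightarrow>
   \<chi> (\<sigma> \<otimes>\<^bsub>G\<^esub> \<tau>) = \<chi> \<sigma> * conj_pi (\<pi> \<sigma>) (\<chi> \<tau>)" using chiZ by (simp add: Z1_C_def)

definition k :: "'g \<Rightarrow> complex" where "k \<sigma> = inverse (\<chi> (inv\<^bsub>G\<^esub> \<sigma>))"

definition usc :: "('g \<Rightarrow> S) \<Rightarrow> 'g \<Rightarrow> (S \<Rightarrow> S) \<times> (S \<Rightarrow> S)" where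
  "usc c \<sigma> = ((\<lambda>m. act (inv\<^bsub>G\<^esub> \<sigma>) m * c (inv\<^bsub>G\<^esub> \<sigma>)),
              (\<lambda>m. act (inv\<^bsub>G\<^esub> \<sigma>) m * (sc (k \<sigma>) * c (inv\<^bsub>G\<^esub> \<sigma>))))"

lemma k_inv: "\<sigma> \<in> carrier G \<Longrightarrow> sc (\<chi> (inv\<^bsub>G\<^esub> \<sigma>)) * sc (k \<sigma>) = 1"
  using chi_nz[of "inv\<^bsub>G\<^esub> \<sigma>"] by (simp add: k_def sc_mult)

lemma usc_res:
  assumes c: "c \<in> Z1_S G act"
  shows "usc c \<in> real_eq_structs G act"
proof -
  have cu: "c \<sigma> dvd 1" if "\<sigma> \<in> carrier G" for \<sigma> using c that by (simp add: Z1_S_def)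
  have cc: "c (\<sigma> \<otimes>\<^bsub>G\<^esub> \<tau>) = c \<sigma> * act \<sigma> (c \<tau>)" if "\<sigma> \<in> carrier G" "\<tau> \<in> carrier G" for \<sigma> \<tau>
    using c that by (simp add: Z1_S_def)
  have part1: "semilin (act (inv\<^bsub>G\<^esub> \<sigma>)) (fst (usc c \<sigma>)) \<and> semilin (act (inv\<^bsub>G\<^esub> \<sigma>)) (snd (usc c \<sigma>)) \<and>
        bij (fst (usc c \<sigma>)) \<and> bij (snd (usc c \<sigma>)) \<and> closed_uv (usc c \<sigma>)" if s: "\<sigma> \<in> carrier G" for \<sigma>
  proof -
    let ?t = "inv\<^bsub>G\<^esub> \<sigma>"
    have t: "?t \<in> carrier G" using s by simp
    obtain a' where a': "c ?t * a' = 1" using cu[OF t] by (metis dvdE)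
    have s1: "semilin (act ?t) (fst (usc c \<sigma>))"
      by (simp add: usc_def semilin_def act_add[OF t] act_mul[OF t] ring_distribs mult_ac)
    have s2: "semilin (act ?t) (snd (usc c \<sigma>))"
      by (simp add: usc_def semilin_def act_add[OF t] act_mul[OF t] ring_distribs mult_ac)
    have b1: "bij (fst (usc c \<sigma>))"
      unfolding usc_def fst_conv by (rule bij_mult_unit[OF act_bij[OF t] a'])
    have "(sc (k \<sigma>) * c ?t) * (sc (\<chi> ?t) * a') = 1"
      using k_inv[OF s] a' by (metis (no_types, lifting) mult.commute mult.left_commute mult.right_neutral)
    hence b2: "bij (snd (usc c \<sigma>))"
      unfolding usc_def snd_conv by (rule bij_mult_unit[OF act_bij[OF t]])
    have "act ?t (U * m) * (sc (k \<sigma>) * c ?t) = U * (act ?t m * c ?t)" for m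
    proof -
      have "act ?t (U * m) * (sc (k \<sigma>) * c ?t) = (sc (\<chi> ?t) * sc (k \<sigma>)) * (U * (act ?t m * c ?t))"
        unfolding act_mul[OF t] chiU[OF t] by (simp only: mult_ac)
      thus ?thesis using k_inv[OF s] by simp
    qed
    moreover have "act ?t (V * m) * c ?t = V * (act ?t m * (sc (k \<sigma>) * c ?t))" for m
      using chiV[OF t] act_mul[OF t] by (simp add: mult_ac k_def)
    ultimately have cl: "closed_uv (usc c \<sigma>)" by (simp add: closed_uv_def usc_def)
    show ?thesis using s1 s2 b1 b2 cl by simp
  qed
  have part2: "usc c (\<sigma>2 \<otimes>\<^bsub>G\<^esub> \<sigma>1) = comp2 (usc c \<sigma>1) (usc c \<sigma>2)"
    if s1: "\<sigma>1 \<in> carrier G" and s2: "\<sigma>2 \<in> carrier G" for \<sigma>1 \<sigma>2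
  proof -
    define x where "x = inv\<^bsub>G\<^esub> \<sigma>1"
    define y where "y = inv\<^bsub>G\<^esub> \<sigma>2"
    have x: "x \<in> carrier G" and y: "y \<in> carrier G" using s1 s2 by (simp_all add: x_def y_def)
    have i: "inv\<^bsub>G\<^esub> (\<sigma>2 \<otimes>\<^bsub>G\<^esub> \<sigma>1) = x \<otimes>\<^bsub>G\<^esub> y" using inv_mult'[OF s2 s1] by (simp add: x_def y_def)
    have kk: "k (\<sigma>2 \<otimes>\<^bsub>G\<^esub> \<sigma>1) = conj_pi (\<pi> x) (k \<sigma>2) * k \<sigma>1"
      unfolding k_def i using chi_coc[OF x y]
      by (simp add: x_def[symmetric] y_def[symmetric] conj_pi_inverse mult.commute)
    have "sc (k (\<sigma>2 \<otimes>\<^bsub>G\<^esub> \<sigma>1)) = sc (conj_pi (\<pi> x) (k \<sigma>2)) * sc (k \<sigma>1)"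
      by (simp add: kk sc_mult)
    hence e2: "act (x \<otimes>\<^bsub>G\<^esub> y) m * (sc (k (\<sigma>2 \<otimes>\<^bsub>G\<^esub> \<sigma>1)) * c (x \<otimes>\<^bsub>G\<^esub> y))
        = act x (act y m * (sc (k \<sigma>2) * c y)) * (sc (k \<sigma>1) * c x)" for m
      unfolding act_mult[OF x y] cc[OF x y] act_mul[OF x] act_sc1[OF x] \<open>sc (k (\<sigma>2 \<otimes>\<^bsub>G\<^esub> \<sigma>1)) = _\<close>
      by (simp only: mult_ac)
    have e1: "act (x \<otimes>\<^bsub>G\<^esub> y) m * c (x \<otimes>\<^bsub>G\<^esub> y) = act x (act y m * c y) * c x" for m
      using act_mult[OF x y] cc[OF x y] act_mul[OF x] by (simp add: mult_ac)
    show ?thesis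
      unfolding usc_def comp2_def i using e1 e2 by (simp add: x_def[symmetric] y_def[symmetric] o_def)
  qed
  show ?thesis using part1 part2 by (simp add: real_eq_structs_def)
qed

lemma one_Z1: "(\<lambda>_. 1) \<in> Z1_S G act"
  by (simp add: Z1_S_def act_1)


lemma struct_form:
  assumes us: "us \<in> real_eq_structs G act" and s: "\<sigma> \<in> carrier G"
  shows "fst (us \<sigma>) m = act (inv\<^bsub>G\<^esub> \<sigma>) m * fst (us \<sigma>) 1"
    and "snd (us \<sigma>) m = act (inv\<^bsub>G\<^esub> \<sigma>) m * (sc (k \<sigma>) * fst (us \<sigma>) 1)"
    and "fst (us \<sigma>) 1 dvd 1"
proof -
  let ?t = "inv\<^bsub>G\<^esub> \<sigma>"
  have t: "?t \<in> carrier G" using s by simp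
  have semA: "semilin (act ?t) (fst (us \<sigma>))" and semB: "semilin (act ?t) (snd (us \<sigma>))"
    and bA: "bij (fst (us \<sigma>))" and cl: "closed_uv (us \<sigma>)"
    using res_at[OF us s] by auto
  have A_form: "fst (us \<sigma>) m = act ?t m * fst (us \<sigma>) 1" for m
    using semA unfolding semilin_def by (metis mult.right_neutral)
  have B_form: "snd (us \<sigma>) m = act ?t m * snd (us \<sigma>) 1" for m
    using semB unfolding semilin_def by (metis mult.right_neutral)
  show "fst (us \<sigma>) m = act (inv\<^bsub>G\<^esub> \<sigma>) m * fst (us \<sigma>) 1" by (rule A_form)
  have "snd (us \<sigma>) (U * 1) = U * fst (us \<sigma>) 1" using cl unfolding closed_uv_def by blast
  hence "act ?t U * snd (us \<sigma>) 1 = U * fst (us \<sigma>) 1" using B_form[of "U * 1"] by simp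
  hence "U * (sc (\<chi> ?t) * snd (us \<sigma>) 1) = U * fst (us \<sigma>) 1" using chiU[OF t] by (simp add: mult_ac)
  hence e: "sc (\<chi> ?t) * snd (us \<sigma>) 1 = fst (us \<sigma>) 1" by (rule U_cancel)
  have "snd (us \<sigma>) 1 = (sc (\<chi> ?t) * sc (k \<sigma>)) * snd (us \<sigma>) 1" using k_inv[OF s] by simp
  also have "\<dots> = sc (k \<sigma>) * (sc (\<chi> ?t) * snd (us \<sigma>) 1)" by (simp only: mult_ac)
  finally have "snd (us \<sigma>) 1 = sc (k \<sigma>) * fst (us \<sigma>) 1" using e by simp
  thus "snd (us \<sigma>) m = act (inv\<^bsub>G\<^esub> \<sigma>) m * (sc (k \<sigma>) * fst (us \<sigma>) 1)" using B_form[of m] by simp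
  obtain m where "fst (us \<sigma>) m = 1" using bA by (metis bij_pointE)
  hence "1 = fst (us \<sigma>) 1 * act ?t m" using A_form[of m] by (simp add: mult.commute)
  thus "fst (us \<sigma>) 1 dvd 1" by (rule dvdI)
qed

definition phi :: "('g \<Rightarrow> (S \<Rightarrow> S) \<times> (S \<Rightarrow> S)) \<Rightarrow> 'g \<Rightarrow> S" where
  "phi us \<sigma> = fst (us (inv\<^bsub>G\<^esub> \<sigma>)) 1"

lemma phi_Z1:
  assumes us: "us \<in> real_eq_structs G act"
  shows "phi us \<in> Z1_S G act"
proof -
  have u: "phi us \<sigma> dvd 1" if "\<sigma> \<in> carrier G" for \<sigma>
    unfolding phi_def using struct_form(3)[OF us] that by simp
  have one: "phi us \<one>\<^bsub>G\<^esub> = 1"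
  proof -
    define a where "a = fst (us \<one>\<^bsub>G\<^esub>) 1"
    have "us (\<one>\<^bsub>G\<^esub> \<otimes>\<^bsub>G\<^esub> \<one>\<^bsub>G\<^esub>) = comp2 (us \<one>\<^bsub>G\<^esub>) (us \<one>\<^bsub>G\<^esub>)" by (rule res_comp[OF us]) simp_all
    hence "us \<one>\<^bsub>G\<^esub> = comp2 (us \<one>\<^bsub>G\<^esub>) (us \<one>\<^bsub>G\<^esub>)" using grp by (simp add: group.is_monoid monoid.l_one)
    hence "a = fst (us \<one>\<^bsub>G\<^esub>) a" unfolding a_def comp2_def by (metis comp_apply fst_conv)
    also have "\<dots> = a * a" using struct_form(1)[OF us one_c, of a] act_one by (simp add: a_def)
    finally have aa: "a = a * a" .
    obtain a' where a': "1 = a * a'" using struct_form(3)[OF us one_c] by (auto simp: a_def elim: dvdE)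
    have "a = a * a * a'" using aa a' by (metis mult.assoc mult.right_neutral)
    also have "\<dots> = 1" using aa a' by (metis mult.assoc)
    finally show ?thesis by (simp add: phi_def a_def)
  qed
  have coc: "phi us (x \<otimes>\<^bsub>G\<^esub> y) = phi us x * act x (phi us y)" if x: "x \<in> carrier G" and y: "y \<in> carrier G" for x y
  proof -
    have "phi us (x \<otimes>\<^bsub>G\<^esub> y) = fst (us (inv\<^bsub>G\<^esub> y \<otimes>\<^bsub>G\<^esub> inv\<^bsub>G\<^esub> x)) 1"
      unfolding phi_def using inv_mult'[OF x y] by simp
    also have "\<dots> = fst (us (inv\<^bsub>G\<^esub> x)) (phi us y)"
      using res_comp[OF us, of "inv\<^bsub>G\<^esub> x" "inv\<^bsub>G\<^esub> y"] x y by (simp add: comp2_def phi_def)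
    also have "\<dots> = act x (phi us y) * phi us x"
      using struct_form(1)[OF us, of "inv\<^bsub>G\<^esub> x" "phi us y"] x by (simp add: phi_def)
    finally show ?thesis by (simp add: mult.commute)
  qed
  show ?thesis using u one coc by (simp add: Z1_S_def)
qed

lemma phi_usc:
  assumes "c \<in> Z1_S G act" "\<sigma> \<in> carrier G"
  shows "phi (usc c) \<sigma> = c \<sigma>"
  using assms by (simp add: phi_def usc_def act_1)


lemma iso_iff:
  assumes us: "us \<in> real_eq_structs G act" and us': "us' \<in> real_eq_structs G act"
  shows "(us, us') \<in> struct_iso G act \<longleftrightarrow> (phi us, phi us') \<in> cohom_S G act"
proof
  assume "(us, us') \<in> struct_iso G act"
  then obtain f where sf: "semilin id (fst f)" and sg: "semilin id (snd f)" and bf: "bij (fst f)"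
    and cl: "closed_uv f" and cm: "\<forall>\<sigma>\<in>carrier G. comp2 (us' \<sigma>) f = comp2 f (us \<sigma>)"
    by (auto simp: struct_iso_def)
  define P where "P = fst f 1"
  have fP: "fst f m = m * P" for m using sf unfolding semilin_def P_def
    by (metis id_apply mult.right_neutral)
  obtain m where "fst f m = 1" using bf by (metis bij_pointE)
  hence "1 = P * m" using fP[of m] by (simp add: mult.commute)
  then obtain Pi where Pi: "P * Pi = 1" by metis
  have "(\<forall>\<sigma>\<in>carrier G. Pi * phi us' \<sigma> = phi us \<sigma> * act \<sigma> Pi)"
  proof
    fix \<sigma> assume s: "\<sigma> \<in> carrier G"
    let ?t = "inv\<^bsub>G\<^esub> \<sigma>"
    have t: "?t \<in> carrier G" using s by simp
    have "fst (comp2 (us' ?t) f) 1 = fst (comp2 f (us ?t)) 1" using cm t by simp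
    hence "fst (us' ?t) P = fst (us ?t) 1 * P" by (simp add: comp2_def fP)
    hence K: "act \<sigma> P * phi us' \<sigma> = phi us \<sigma> * P"
      using struct_form(1)[OF us' t, of P] s by (simp add: phi_def)
    have U: "act \<sigma> P * act \<sigma> Pi = 1" by (rule act_unit[OF s Pi])
    have "Pi * phi us' \<sigma> = Pi * phi us' \<sigma> * (act \<sigma> P * act \<sigma> Pi)" using U by simp
    also have "\<dots> = Pi * (act \<sigma> P * phi us' \<sigma>) * act \<sigma> Pi" by (simp only: mult_ac)
    also have "\<dots> = phi us \<sigma> * act \<sigma> Pi * (P * Pi)" unfolding K by (simp only: mult_ac)
    finally show "Pi * phi us' \<sigma> = phi us \<sigma> * act \<sigma> Pi" using Pi by simp
  qed
  moreover have "Pi dvd 1" using Pi by (metis dvdI mult.commute)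
  ultimately show "(phi us, phi us') \<in> cohom_S G act"
    using phi_Z1[OF us] phi_Z1[OF us'] by (auto simp: cohom_S_def)
next
  assume "(phi us, phi us') \<in> cohom_S G act"
  then obtain b where bu: "b dvd 1" and bc: "\<forall>\<sigma>\<in>carrier G. b * phi us' \<sigma> = phi us \<sigma> * act \<sigma> b"
    by (auto simp: cohom_S_def)
  obtain p where bp: "1 = b * p" using bu by (auto elim: dvdE)
  define f where "f = ((\<lambda>m::S. m * p), (\<lambda>m::S. m * p))"
  have semf: "semilin id (fst f)" "semilin id (snd f)" by (simp_all add: f_def semilin_def ring_distribs mult_ac)
  have "bij (\<lambda>m. id m * p)" by (rule bij_mult_unit[of id p b]) (simp, metis bp mult.commute)
  hence bf: "bij (fst f)" "bij (snd f)" by (simp_all add: f_def)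
  have clf: "closed_uv f" by (simp add: closed_uv_def f_def mult_ac)
  have "\<forall>\<sigma>\<in>carrier G. comp2 (us' \<sigma>) f = comp2 f (us \<sigma>)"
  proof
    fix \<sigma> assume s: "\<sigma> \<in> carrier G"
    let ?t = "inv\<^bsub>G\<^esub> \<sigma>"
    have t: "?t \<in> carrier G" using s by simp
    have e: "b * fst (us' \<sigma>) 1 = fst (us \<sigma>) 1 * act ?t b"
      using bc[rule_format, OF t] s by (simp add: phi_def)
    have U: "act ?t b * act ?t p = 1" using act_unit[OF t] bp by simp
    have K: "act ?t p * fst (us' \<sigma>) 1 = fst (us \<sigma>) 1 * p"
    proof -
      have "act ?t p * fst (us' \<sigma>) 1 = act ?t p * fst (us' \<sigma>) 1 * (b * p)" using bp by simp
      also have "\<dots> = p * act ?t p * (b * fst (us' \<sigma>) 1)" by (simp only: mult_ac)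
      also have "\<dots> = p * fst (us \<sigma>) 1 * (act ?t b * act ?t p)" unfolding e by (simp only: mult_ac)
      finally show ?thesis using U by (simp add: mult.commute)
    qed
    have c1: "fst (us' \<sigma>) (m * p) = fst (us \<sigma>) m * p" for m
    proof -
      have "fst (us' \<sigma>) (m * p) = act ?t m * (act ?t p * fst (us' \<sigma>) 1)"
        using struct_form(1)[OF us' s, of "m * p"] act_mul[OF t] by (simp only: mult_ac)
      also have "\<dots> = fst (us \<sigma>) m * p"
        unfolding K using struct_form(1)[OF us s, of m] by (simp only: mult_ac)
      finally show ?thesis .
    qed
    have c2: "snd (us' \<sigma>) (m * p) = snd (us \<sigma>) m * p" for m
    proof -
      have "snd (us' \<sigma>) (m * p) = act ?t m * sc (k \<sigma>) * (act ?t p * fst (us' \<sigma>) 1)"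
        using struct_form(2)[OF us' s, of "m * p"] act_mul[OF t] by (simp only: mult_ac)
      also have "\<dots> = snd (us \<sigma>) m * p"
        unfolding K using struct_form(2)[OF us s, of m] by (simp only: mult_ac)
      finally show ?thesis .
    qed
    show "comp2 (us' \<sigma>) f = comp2 f (us \<sigma>)"
      using c1 c2 by (simp add: comp2_def f_def fun_eq_iff)
  qed
  thus "(us, us') \<in> struct_iso G act" using us us' semf bf clf
    unfolding struct_iso_def by blast
qed

lemma cohom_equiv: "equiv (Z1_S G act) (cohom_S G act)"
proof (rule equivI)
  show "refl_on (Z1_S G act) (cohom_S G act)"
    by (rule refl_onI) (auto simp: cohom_S_def act_1 intro!: exI[where x=1])
  show "sym (cohom_S G act)"
  proof (rule symI)
    fix c c' assume "(c, c') \<in> cohom_S G act"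
    then obtain b where cz: "c \<in> Z1_S G act" "c' \<in> Z1_S G act" and "b dvd 1"
      and bc: "\<forall>\<sigma>\<in>carrier G. b * c' \<sigma> = c \<sigma> * act \<sigma> b" by (auto simp: cohom_S_def)
    then obtain p where bp: "1 = b * p" by (auto elim: dvdE)
    have "\<forall>\<sigma>\<in>carrier G. p * c \<sigma> = c' \<sigma> * act \<sigma> p"
    proof
      fix \<sigma> assume s: "\<sigma> \<in> carrier G"
      have U: "act \<sigma> b * act \<sigma> p = 1" using act_unit[OF s] bp by simp
      have "p * c \<sigma> = p * c \<sigma> * (act \<sigma> b * act \<sigma> p)" using U by simp
      also have "\<dots> = p * (c \<sigma> * act \<sigma> b) * act \<sigma> p" by (simp only: mult_ac)
      also have "\<dots> = (b * p) * c' \<sigma> * act \<sigma> p" unfolding bc[rule_format, OF s, symmetric] by (simp only: mult_ac)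
      finally show "p * c \<sigma> = c' \<sigma> * act \<sigma> p" using bp by simp
    qed
    moreover have "p dvd 1" using bp by (metis dvdI mult.commute)
    ultimately show "(c', c) \<in> cohom_S G act" using cz by (auto simp: cohom_S_def)
  qed
  show "trans (cohom_S G act)"
  proof (rule transI)
    fix c c' c'' assume "(c, c') \<in> cohom_S G act" "(c', c'') \<in> cohom_S G act"
    then obtain b1 b2 where cz: "c \<in> Z1_S G act" "c'' \<in> Z1_S G act" and "b1 dvd 1" "b2 dvd 1"
      and b1: "\<forall>\<sigma>\<in>carrier G. b1 * c' \<sigma> = c \<sigma> * act \<sigma> b1"
      and b2: "\<forall>\<sigma>\<in>carrier G. b2 * c'' \<sigma> = c' \<sigma> * act \<sigma> b2" by (auto simp: cohom_S_def)
    have "\<forall>\<sigma>\<in>carrier G. (b1 * b2) * c'' \<sigma> = c \<sigma> * act \<sigma> (b1 * b2)"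
    proof
      fix \<sigma> assume s: "\<sigma> \<in> carrier G"
      have "(b1 * b2) * c'' \<sigma> = b1 * (b2 * c'' \<sigma>)" by (simp only: mult_ac)
      also have "\<dots> = (b1 * c' \<sigma>) * act \<sigma> b2" unfolding b2[rule_format, OF s] by (simp only: mult_ac)
      also have "\<dots> = c \<sigma> * act \<sigma> (b1 * b2)" unfolding b1[rule_format, OF s] act_mul[OF s] by (simp only: mult_ac)
      finally show "(b1 * b2) * c'' \<sigma> = c \<sigma> * act \<sigma> (b1 * b2)" .
    qed
    moreover have "b1 * b2 dvd 1" using \<open>b1 dvd 1\<close> \<open>b2 dvd 1\<close> by (metis mult_dvd_mono mult_1_left)
    ultimately show "(c, c'') \<in> cohom_S G act" using cz by (auto simp: cohom_S_def)
  qed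
  show "cohom_S G act \<subseteq> Z1_S G act \<times> Z1_S G act" by (auto simp: cohom_S_def)
qed


lemma bij_part: "\<exists>F. bij_betw F (real_eq_structs G act // struct_iso G act) (H1_S G act)"
  unfolding H1_S_def
proof (rule quot_bij[where \<Phi> = phi])
  show "equiv (Z1_S G act) (cohom_S G act)" by (rule cohom_equiv)
  show "struct_iso G act \<subseteq> real_eq_structs G act \<times> real_eq_structs G act"
    by (auto simp: struct_iso_def)
  show "\<forall>x\<in>real_eq_structs G act. phi x \<in> Z1_S G act" using phi_Z1 by blast
  show "\<forall>x\<in>real_eq_structs G act. \<forall>y\<in>real_eq_structs G act.
          (x, y) \<in> struct_iso G act \<longleftrightarrow> (phi x, phi y) \<in> cohom_S G act" using iso_iff by blast
  show "\<forall>y\<in>Z1_S G act. \<exists>x\<in>real_eq_structs G act. (phi x, y) \<in> cohom_S G act"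
  proof
    fix y assume y: "y \<in> Z1_S G act"
    have "(phi (usc y), y) \<in> cohom_S G act"
      unfolding cohom_S_def using phi_Z1[OF usc_res[OF y]] y phi_usc[OF y]
      by (auto simp: act_1 intro!: exI[where x=1])
    thus "\<exists>x\<in>real_eq_structs G act. (phi x, y) \<in> cohom_S G act" using usc_res[OF y] by blast
  qed
qed
end


theorem mainTheorem8:
  fixes G :: "('g, 'm) monoid_scheme" and \<pi> :: "'g \<Rightarrow> int" and act :: "'g \<Rightarrow> S \<Rightarrow> S"
  assumes "C2_graded_group G \<pi>" and "finite (carrier G)" and "valid_action G \<pi> act"
  shows "(real_eq_structs G act \<noteq> {} \<longleftrightarrow>
            (\<exists>\<chi>\<in>Z1_C G \<pi>. \<forall>\<sigma>\<in>carrier G.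
               act \<sigma> U = sc (\<chi> \<sigma>) * U \<and> act \<sigma> V = sc (inverse (\<chi> \<sigma>)) * V))
       \<and> ((\<exists>\<chi>\<in>Z1_C G \<pi>. \<forall>\<sigma>\<in>carrier G.
               act \<sigma> U = sc (\<chi> \<sigma>) * U \<and> act \<sigma> V = sc (inverse (\<chi> \<sigma>)) * V) \<longrightarrow>
            (\<exists>F. bij_betw F (real_eq_structs G act // struct_iso G act) (H1_S G act)))"
proof -
  interpret setting G \<pi> act using assms(1,3) by unfold_locales
  have P1: "real_eq_structs G act \<noteq> {} \<longleftrightarrow>
            (\<exists>\<chi>\<in>Z1_C G \<pi>. \<forall>\<sigma>\<in>carrier G.
               act \<sigma> U = sc (\<chi> \<sigma>) * U \<and> act \<sigma> V = sc (inverse (\<chi> \<sigma>)) * V)"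
  proof
    assume "real_eq_structs G act \<noteq> {}"
    then obtain us where "us \<in> real_eq_structs G act" by blast
    thus "\<exists>\<chi>\<in>Z1_C G \<pi>. \<forall>\<sigma>\<in>carrier G.
               act \<sigma> U = sc (\<chi> \<sigma>) * U \<and> act \<sigma> V = sc (inverse (\<chi> \<sigma>)) * V"
      using chi_exists struct_U by blast
  next
    assume "\<exists>\<chi>\<in>Z1_C G \<pi>. \<forall>\<sigma>\<in>carrier G.
               act \<sigma> U = sc (\<chi> \<sigma>) * U \<and> act \<sigma> V = sc (inverse (\<chi> \<sigma>)) * V"
    then obtain \<chi> where "\<chi> \<in> Z1_C G \<pi>" "\<forall>\<sigma>\<in>carrier G.
               act \<sigma> U = sc (\<chi> \<sigma>) * U \<and> act \<sigma> V = sc (inverse (\<chi> \<sigma>)) * V" by blast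
    then interpret chiset G \<pi> act \<chi> by unfold_locales
    show "real_eq_structs G act \<noteq> {}" using usc_res[OF one_Z1] by blast
  qed
  have P2: "(\<exists>\<chi>\<in>Z1_C G \<pi>. \<forall>\<sigma>\<in>carrier G.
               act \<sigma> U = sc (\<chi> \<sigma>) * U \<and> act \<sigma> V = sc (inverse (\<chi> \<sigma>)) * V) \<longrightarrow>
            (\<exists>F. bij_betw F (real_eq_structs G act // struct_iso G act) (H1_S G act))"
  proof
    assume "\<exists>\<chi>\<in>Z1_C G \<pi>. \<forall>\<sigma>\<in>carrier G.
               act \<sigma> U = sc (\<chi> \<sigma>) * U \<and> act \<sigma> V = sc (inverse (\<chi> \<sigma>)) * V"
    then obtain \<chi> where "\<chi> \<in> Z1_C G \<pi>" "\<forall>\<sigma>\<in>carrier G.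
               act \<sigma> U = sc (\<chi> \<sigma>) * U \<and> act \<sigma> V = sc (inverse (\<chi> \<sigma>)) * V" by blast
    then interpret chiset G \<pi> act \<chi> by unfold_locales
    show "\<exists>F. bij_betw F (real_eq_structs G act // struct_iso G act) (H1_S G act)" by (rule bij_part)
  qed
  show ?thesis using P1 P2 by blast
qed

end
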